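(* Let $\mathcal{F}$ and $\mathcal{L}$ be classes of simple graphs, where $\mathcal{L}$ is finite and its elements are pairwise non-isomorphic. Let $\alpha\colon\mathcal{L}\to\mathbb{R}\setminus\{0\}$. If for all simple graphs $G$ and $H$, \[ G\equiv_{\mathcal{F}}H \implies \sum_{L\in\mathcal{L}}\alpha_L\hom(L,G)=\sum_{L\in\mathcal{L}}\alpha_L\hom(L,H),\] then $\mathcal{L}\subseteq\mathrm{cl}(\mathcal{F})$.
   Context: All graphs are finite, undirected, without multiple edges; simple means without loops. $\hom(F,G)$ is the number of homomorphisms $F\to G$. $G\equiv_{\mathcal{F}}H$ means $\hom(F,G)=\hom(F,H)$ for all $F\in\mathcal{F}$. $\mathrm{cl}(\mathcal{F})$ is the class of all simple graphs $K$ such that for all simple graphs $G,H$, $G\equiv_{\mathcal{F}}H$ implies $\hom(K,G)=\hom(K,H)$. *)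

theory Defs
  imports Complex_Main "HOL-Library.FuncSet"
begin

text \<open>A graph is a pair (V, E) with vertex set V of natural numbers and edge set E
  of ordered pairs (an undirected edge {u,v} is stored as both (u,v) and (v,u)).
  Every finite graph is isomorphic to one of this form.\<close>
type_synonym graph = "nat set \<times> (nat \<times> nat) set"

definition verts :: "graph \<Rightarrow> nat set" where "verts G = fst G"
definition edges :: "graph \<Rightarrow> (nat \<times> nat) set" where "edges G = snd G"

definition simple_graph :: "graph \<Rightarrow> bool" where
  "simple_graph G \<longleftrightarrow> finite (verts G) \<and> edges G \<subseteq> verts G \<times> verts G
     \<and> (\<forall>u v. (u,v) \<in> edges G \<longrightarrow> (v,u) \<in> edges G)
     \<and> (\<forall>v. (v,v) \<notin> edges G)"

definition homs :: "graph \<Rightarrow> graph \<Rightarrow> (nat \<Rightarrow> nat) set" where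
  "homs F G = {f \<in> verts F \<rightarrow>\<^sub>E verts G.
      \<forall>u v. (u,v) \<in> edges F \<longrightarrow> (f u, f v) \<in> edges G}"

definition hom :: "graph \<Rightarrow> graph \<Rightarrow> nat" where
  "hom F G = card (homs F G)"

definition iso :: "graph \<Rightarrow> graph \<Rightarrow> bool" where
  "iso F G \<longleftrightarrow> (\<exists>f. bij_betw f (verts F) (verts G) \<and>
      (\<forall>u\<in>verts F. \<forall>v\<in>verts F. (u,v) \<in> edges F \<longleftrightarrow> (f u, f v) \<in> edges G))"

definition hom_equiv :: "graph set \<Rightarrow> graph \<Rightarrow> graph \<Rightarrow> bool" where
  "hom_equiv \<F> G H \<longleftrightarrow> (\<forall>F\<in>\<F>. hom F G = hom F H)"

definition cl :: "graph set \<Rightarrow> graph set" where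
  "cl \<F> = {K. simple_graph K \<and> (\<forall>G H. simple_graph G \<longrightarrow> simple_graph H \<longrightarrow>
       hom_equiv \<F> G H \<longrightarrow> hom K G = hom K H)}"

end

theory Submission imports Defs "HOL-Library.Nat_Bijection" begin

definition ind :: "graph \<Rightarrow> nat set \<Rightarrow> graph" where "ind G S = (S, edges G \<inter> S \<times> S)"
definition surjv :: "graph \<Rightarrow> graph \<Rightarrow> nat" where
  "surjv F G = card {f \<in> homs F G. f ` verts F = verts G}"

lemma verts_ind[simp]: "verts (ind G S) = S" by (simp add: ind_def verts_def)
lemma edges_ind[simp]: "edges (ind G S) = edges G \<inter> S \<times> S" by (simp add: ind_def edges_def)

lemma simple_ind: "simple_graph G \<Longrightarrow> S \<subseteq> verts G \<Longrightarrow> simple_graph (ind G S)"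
  unfolding simple_graph_def by (auto intro: finite_subset)

lemma ind_self: "simple_graph G \<Longrightarrow> ind G (verts G) = G"
  unfolding simple_graph_def ind_def verts_def edges_def by (cases G) auto

lemma finite_homs: "finite (verts F) \<Longrightarrow> finite (verts G) \<Longrightarrow> finite (homs F G)"
  unfolding homs_def by (rule finite_subset[OF _ finite_PiE[of "verts F" "\<lambda>_. verts G"]]) auto

lemma hom_decomp:
  assumes F: "simple_graph F" and G: "simple_graph G"
  shows "hom F G = (\<Sum>S\<in>Pow (verts G). surjv F (ind G S))"
proof -
  have fin: "finite (verts F)" "finite (verts G)" using F G by (auto simp: simple_graph_def)
  have eq: "homs F G = (\<Union>S\<in>Pow (verts G). {f \<in> homs F (ind G S). f ` verts F = verts (ind G S)})"
  proof (rule set_eqI, rule iffI)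
    fix f assume f: "f \<in> homs F G"
    let ?S = "f ` verts F"
    have "?S \<in> Pow (verts G)" using f by (auto simp: homs_def)
    moreover have "f \<in> homs F (ind G ?S)"
      using f F unfolding homs_def simple_graph_def by auto
    ultimately show "f \<in> (\<Union>S\<in>Pow (verts G). {f \<in> homs F (ind G S). f ` verts F = verts (ind G S)})"
      by auto
  next
    fix f assume "f \<in> (\<Union>S\<in>Pow (verts G). {f \<in> homs F (ind G S). f ` verts F = verts (ind G S)})"
    then obtain S where "S \<subseteq> verts G" "f \<in> homs F (ind G S)" by auto
    then show "f \<in> homs F G" unfolding homs_def by (auto simp: PiE_iff)
  qed
  have "hom F G = (\<Sum>S\<in>Pow (verts G). card {f \<in> homs F (ind G S). f ` verts F = verts (ind G S)})"
    unfolding hom_def eq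
  proof (rule card_UN_disjoint)
    show "finite (Pow (verts G))" using fin by simp
    show "\<forall>i\<in>Pow (verts G). finite {f \<in> homs F (ind G i). f ` verts F = verts (ind G i)}"
      using fin finite_homs[of F "ind G _"] by (auto intro: finite_subset)
    show "\<forall>i\<in>Pow (verts G). \<forall>j\<in>Pow (verts G). i \<noteq> j \<longrightarrow>
        {f \<in> homs F (ind G i). f ` verts F = verts (ind G i)} \<inter> {f \<in> homs F (ind G j). f ` verts F = verts (ind G j)} = {}"
      by auto
  qed
  then show ?thesis by (simp add: surjv_def)
qed

lemma surjv_eq:
  assumes F: "simple_graph F" and F': "simple_graph F'"
    and h: "\<forall>K. simple_graph K \<longrightarrow> hom F K = hom F' K"
  shows "simple_graph G \<Longrightarrow> surjv F G = surjv F' G"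
proof (induction "card (verts G)" arbitrary: G rule: less_induct)
  case less
  have fin: "finite (verts G)" using less.prems by (simp add: simple_graph_def)
  have split: "hom X G = surjv X G + (\<Sum>S\<in>Pow (verts G) - {verts G}. surjv X (ind G S))"
    if "simple_graph X" for X
    using hom_decomp[OF that less.prems] fin
    by (simp add: sum.remove[of "Pow (verts G)" "verts G"] ind_self[OF less.prems])
  have "(\<Sum>S\<in>Pow (verts G) - {verts G}. surjv F (ind G S)) = (\<Sum>S\<in>Pow (verts G) - {verts G}. surjv F' (ind G S))"
  proof (rule sum.cong[OF refl])
    fix S assume S: "S \<in> Pow (verts G) - {verts G}"
    then have "card S < card (verts G)" using fin by (auto intro: psubset_card_mono)
    moreover have "simple_graph (ind G S)" using S less.prems simple_ind by auto
    ultimately show "surjv F (ind G S) = surjv F' (ind G S)" using less.hyps[of "ind G S"] by simp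
  qed
  then show ?case using split[OF F] split[OF F'] h less.prems by simp
qed

lemma surjv_pos: "surjv F G > 0 \<Longrightarrow> \<exists>f\<in>homs F G. f ` verts F = verts G"
  unfolding surjv_def by (auto simp: card_gt_0_iff)

lemma surjv_self: assumes "simple_graph F" shows "surjv F F > 0"
proof -
  let ?f = "\<lambda>v. if v \<in> verts F then v else undefined"
  have "?f \<in> {f \<in> homs F F. f ` verts F = verts F}"
    using assms unfolding homs_def simple_graph_def by auto
  moreover have "finite {f \<in> homs F F. f ` verts F = verts F}"
    using assms finite_homs by (auto simp: simple_graph_def)
  ultimately show ?thesis unfolding surjv_def by (auto simp: card_gt_0_iff)
qed

lemma surj_hom_props:
  assumes F: "simple_graph F" and F': "simple_graph F'"
    and f: "f \<in> homs F' F" "f ` verts F' = verts F"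
    and g: "g \<in> homs F F'" "g ` verts F = verts F'"
  shows "inj_on f (verts F')" "card (edges F') \<le> card (edges F)"
proof -
  have fin: "finite (verts F)" "finite (verts F')" using F F' by (auto simp: simple_graph_def)
  have "card (verts F) \<le> card (verts F')" using f(2) fin card_image_le by metis
  moreover have "card (verts F') \<le> card (verts F)" using g(2) fin card_image_le by metis
  ultimately have "card (f ` verts F') = card (verts F')" using f(2) by simp
  then show inj: "inj_on f (verts F')" using fin eq_card_imp_inj_on by blast
  let ?p = "\<lambda>(u,v). (f u, f v)"
  have sub: "edges F' \<subseteq> verts F' \<times> verts F'" using F' by (simp add: simple_graph_def)
  have "inj_on ?p (edges F')"
    using inj sub unfolding inj_on_def by auto
  moreover have "?p ` edges F' \<subseteq> edges F" using f(1) unfolding homs_def by auto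
  moreover have "finite (edges F)" using F fin by (auto simp: simple_graph_def intro: finite_subset)
  ultimately show "card (edges F') \<le> card (edges F)" by (rule card_inj_on_le)
qed

lemma hom_eq_iso:
  assumes F: "simple_graph F" and F': "simple_graph F'"
    and h: "\<forall>K. simple_graph K \<longrightarrow> hom F K = hom F' K"
  shows "iso F' F"
proof -
  have h': "\<forall>K. simple_graph K \<longrightarrow> hom F' K = hom F K" using h by simp
  have "surjv F' F > 0" using surjv_eq[OF F F' h F] surjv_self[OF F] by simp
  then obtain f where f: "f \<in> homs F' F" "f ` verts F' = verts F" using surjv_pos by blast
  have "surjv F F' > 0" using surjv_eq[OF F' F h' F'] surjv_self[OF F'] by simp
  then obtain g where g: "g \<in> homs F F'" "g ` verts F = verts F'" using surjv_pos by blast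
  note A = surj_hom_props[OF F F' f g]
  note B = surj_hom_props[OF F' F g f]
  have fin: "finite (verts F)" "finite (verts F')" using F F' by (auto simp: simple_graph_def)
  let ?p = "\<lambda>(u,v). (f u, f v)"
  have sub: "edges F' \<subseteq> verts F' \<times> verts F'" using F' by (simp add: simple_graph_def)
  have "inj_on ?p (edges F')"
    using A(1) sub unfolding inj_on_def by auto
  then have c: "card (?p ` edges F') = card (edges F)" using A(2) B(2) card_image by fastforce
  have s: "?p ` edges F' \<subseteq> edges F" using f(1) unfolding homs_def by auto
  have "finite (edges F)" using F fin by (auto simp: simple_graph_def intro: finite_subset)
  then have E: "?p ` edges F' = edges F" using card_subset_eq s c by blast
  have "\<forall>u\<in>verts F'. \<forall>v\<in>verts F'. (u,v) \<in> edges F' \<longleftrightarrow> (f u, f v) \<in> edges F"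
  proof (intro ballI iffI)
    fix u v assume uv: "u \<in> verts F'" "v \<in> verts F'"
    { assume "(u,v) \<in> edges F'" then show "(f u, f v) \<in> edges F" using s by auto }
    { assume "(f u, f v) \<in> edges F"
      then have "(f u, f v) \<in> ?p ` edges F'" using E by simp
      then obtain a b where ab: "(a,b) \<in> edges F'" "f a = f u" "f b = f v" by auto
      then have "a \<in> verts F'" "b \<in> verts F'" using sub by auto
      then have "a = u" "b = v" using ab A(1) uv unfolding inj_on_def by auto
      then show "(u,v) \<in> edges F'" using ab by simp }
  qed
  moreover have "bij_betw f (verts F') (verts F)" using A(1) f(2) by (simp add: bij_betw_def)
  ultimately show ?thesis unfolding iso_def by blast
qed

definition gprod :: "graph \<Rightarrow> graph \<Rightarrow> graph" where
  "gprod G K = (prod_encode ` (verts G \<times> verts K),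
     {(prod_encode (a,b), prod_encode (c,d)) | a b c d. (a,c) \<in> edges G \<and> (b,d) \<in> edges K})"

lemma verts_gprod: "verts (gprod G K) = prod_encode ` (verts G \<times> verts K)"
  by (simp add: gprod_def verts_def)
lemma edges_gprod: "edges (gprod G K) =
   {(prod_encode (a,b), prod_encode (c,d)) | a b c d. (a,c) \<in> edges G \<and> (b,d) \<in> edges K}"
  by (simp add: gprod_def edges_def)

lemma simple_gprod: "simple_graph G \<Longrightarrow> simple_graph K \<Longrightarrow> simple_graph (gprod G K)"
  unfolding simple_graph_def verts_gprod edges_gprod
  by (auto dest: inj_onD[OF inj_prod_encode, simplified])

lemma hom_gprod:
  assumes F: "simple_graph F"
  shows "hom F (gprod G K) = hom F G * hom F K"
proof -
  let ?V = "verts F"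
  define \<phi> where "\<phi> h = ((\<lambda>v. if v \<in> ?V then fst (prod_decode (h v)) else undefined),
     (\<lambda>v. if v \<in> ?V then snd (prod_decode (h v)) else undefined))" for h :: "nat \<Rightarrow> nat"
  define \<psi> where "\<psi> p = (\<lambda>v. if v \<in> ?V then prod_encode (fst p v, snd p v) else undefined)"
    for p :: "(nat \<Rightarrow> nat) \<times> (nat \<Rightarrow> nat)"
  have sub: "edges F \<subseteq> ?V \<times> ?V" using F by (simp add: simple_graph_def)
  have "bij_betw \<phi> (homs F (gprod G K)) (homs F G \<times> homs F K)"
  proof (rule bij_betw_byWitness[where f'=\<psi>])
    show "\<forall>h\<in>homs F (gprod G K). \<psi> (\<phi> h) = h"
    proof
      fix h assume h: "h \<in> homs F (gprod G K)"
      show "\<psi> (\<phi> h) = h"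
      proof
        fix v show "\<psi> (\<phi> h) v = h v"
          using h by (cases "v \<in> ?V") (auto simp: \<psi>_def \<phi>_def homs_def PiE_iff extensional_def)
      qed
    qed
    show "\<forall>p\<in>homs F G \<times> homs F K. \<phi> (\<psi> p) = p"
    proof
      fix p assume p: "p \<in> homs F G \<times> homs F K"
      obtain f g where fg: "p = (f,g)" by (cases p)
      have "(\<lambda>v. if v \<in> ?V then f v else undefined) = f" "(\<lambda>v. if v \<in> ?V then g v else undefined) = g"
        using p fg by (auto simp: homs_def PiE_iff extensional_def)
      then show "\<phi> (\<psi> p) = p" using fg by (simp add: \<psi>_def \<phi>_def cong: if_cong)
    qed
    show "\<phi> ` homs F (gprod G K) \<subseteq> homs F G \<times> homs F K"
    proof
      fix q assume "q \<in> \<phi> ` homs F (gprod G K)"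
      then obtain h where h: "h \<in> homs F (gprod G K)" and q: "q = \<phi> h" by auto
      have hv: "\<And>v. v \<in> ?V \<Longrightarrow> prod_decode (h v) \<in> verts G \<times> verts K"
        using h by (force simp: homs_def verts_gprod PiE_iff)
      have he: "\<And>u v. (u,v) \<in> edges F \<Longrightarrow> (fst (prod_decode (h u)), fst (prod_decode (h v))) \<in> edges G
            \<and> (snd (prod_decode (h u)), snd (prod_decode (h v))) \<in> edges K"
        using h by (fastforce simp: homs_def edges_gprod)
      show "q \<in> homs F G \<times> homs F K"
        unfolding q \<phi>_def homs_def using hv he sub by (auto simp: mem_Times_iff)
    qed
    show "\<psi> ` (homs F G \<times> homs F K) \<subseteq> homs F (gprod G K)"
    proof
      fix h assume "h \<in> \<psi> ` (homs F G \<times> homs F K)"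
      then obtain f g where f: "f \<in> homs F G" and g: "g \<in> homs F K" and h: "h = \<psi> (f,g)" by auto
      show "h \<in> homs F (gprod G K)"
        using f g sub unfolding h \<psi>_def homs_def verts_gprod edges_gprod by fastforce
    qed
  qed
  then have "card (homs F (gprod G K)) = card (homs F G \<times> homs F K)" by (rule bij_betw_same_card)
  then show ?thesis by (simp add: hom_def card_cartesian_product)
qed

theorem lemma6:
  fixes \<F> \<L> :: "graph set" and \<alpha> :: "graph \<Rightarrow> real"
  assumes "\<forall>F\<in>\<F>. simple_graph F"
    and "\<forall>L\<in>\<L>. simple_graph L"
    and "finite \<L>"
    and "\<forall>L1\<in>\<L>. \<forall>L2\<in>\<L>. L1 \<noteq> L2 \<longrightarrow> \<not> iso L1 L2"
    and "\<forall>L\<in>\<L>. \<alpha> L \<noteq> 0"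
    and "\<forall>G H. simple_graph G \<longrightarrow> simple_graph H \<longrightarrow> hom_equiv \<F> G H \<longrightarrow>
           (\<Sum>L\<in>\<L>. \<alpha> L * real (hom L G)) = (\<Sum>L\<in>\<L>. \<alpha> L * real (hom L H))"
  shows "\<L> \<subseteq> cl \<F>"
proof
  define Inv where "Inv w \<longleftrightarrow> (\<forall>G H. simple_graph G \<longrightarrow> simple_graph H \<longrightarrow> hom_equiv \<F> G H \<longrightarrow>
     (\<Sum>L\<in>\<L>. \<alpha> L * w L * real (hom L G)) = (\<Sum>L\<in>\<L>. \<alpha> L * w L * real (hom L H)))"
    for w :: "graph \<Rightarrow> real"
  have Inv1: "Inv (\<lambda>_. 1)" using assms(6) by (simp add: Inv_def)
  have Invstep: "Inv (\<lambda>L. w L * (real (hom L K) - t))" if w: "Inv w" and K: "simple_graph K" for w K t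
    unfolding Inv_def
  proof (intro allI impI)
    fix G H assume G: "simple_graph G" and H: "simple_graph H" and e: "hom_equiv \<F> G H"
    have e2: "hom_equiv \<F> (gprod G K) (gprod H K)"
      using e assms(1) hom_gprod by (simp add: hom_equiv_def)
    have s1: "(\<Sum>L\<in>\<L>. \<alpha> L * w L * real (hom L (gprod G K))) = (\<Sum>L\<in>\<L>. \<alpha> L * w L * real (hom L (gprod H K)))"
      using w e2 simple_gprod[OF G K] simple_gprod[OF H K] unfolding Inv_def by blast
    have p: "\<And>X. (\<Sum>L\<in>\<L>. \<alpha> L * w L * real (hom L (gprod X K))) = (\<Sum>L\<in>\<L>. \<alpha> L * w L * real (hom L K) * real (hom L X))"
      by (rule sum.cong[OF refl]) (simp add: hom_gprod assms(2))
    have s2: "(\<Sum>L\<in>\<L>. \<alpha> L * w L * real (hom L G)) = (\<Sum>L\<in>\<L>. \<alpha> L * w L * real (hom L H))"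
      using w G H e unfolding Inv_def by blast
    have d: "\<And>X. (\<Sum>L\<in>\<L>. \<alpha> L * (w L * (real (hom L K) - t)) * real (hom L X)) =
       (\<Sum>L\<in>\<L>. \<alpha> L * w L * real (hom L K) * real (hom L X)) - t * (\<Sum>L\<in>\<L>. \<alpha> L * w L * real (hom L X))"
      by (simp add: sum_distrib_left sum_subtractf[symmetric] algebra_simps)
    show "(\<Sum>L\<in>\<L>. \<alpha> L * (w L * (real (hom L K) - t)) * real (hom L G)) =
          (\<Sum>L\<in>\<L>. \<alpha> L * (w L * (real (hom L K) - t)) * real (hom L H))"
      using d s1 s2 p by simp
  qed
  fix L0 assume L0: "L0 \<in> \<L>"
  have "\<forall>M\<in>\<L>-{L0}. \<exists>K. simple_graph K \<and> hom M K \<noteq> hom L0 K"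
  proof
    fix M assume M: "M \<in> \<L>-{L0}"
    show "\<exists>K. simple_graph K \<and> hom M K \<noteq> hom L0 K"
    proof (rule ccontr)
      assume "\<not> ?thesis"
      then have "\<forall>K. simple_graph K \<longrightarrow> hom M K = hom L0 K" by blast
      then have "iso L0 M" using hom_eq_iso[of M L0] M L0 assms(2) by blast
      then show False using assms(4) M L0 by auto
    qed
  qed
  then obtain K where K: "\<And>M. M \<in> \<L>-{L0} \<Longrightarrow> simple_graph (K M) \<and> hom M (K M) \<noteq> hom L0 (K M)"
    by metis
  define w where "w T L = (\<Prod>M\<in>T. real (hom L (K M)) - real (hom M (K M)))" for T L
  have "T \<subseteq> \<L>-{L0} \<Longrightarrow> Inv (w T)" for T
  proof -
    assume T: "T \<subseteq> \<L>-{L0}"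
    have "finite T" using T assms(3) finite_subset by blast
    then show ?thesis using T
    proof (induction T rule: finite_induct)
      case empty
      then show ?case using Inv1 by (simp add: w_def)
    next
      case (insert x T)
      have "Inv (\<lambda>L. w T L * (real (hom L (K x)) - real (hom x (K x))))"
        using Invstep insert K by auto
      moreover have "(\<lambda>L. w T L * (real (hom L (K x)) - real (hom x (K x)))) = w (insert x T)"
        using insert by (auto simp: w_def mult.commute)
      ultimately show ?case by simp
    qed
  qed
  then have IW: "Inv (w (\<L>-{L0}))" by simp
  have z: "w (\<L>-{L0}) L = 0" if "L \<in> \<L>-{L0}" for L
    unfolding w_def using that assms(3) by (intro prod_zero) (auto intro!: bexI[of _ L])
  have nz: "w (\<L>-{L0}) L0 \<noteq> 0"
    unfolding w_def using assms(3) K by (simp add: prod_zero_iff) (metis DiffE insertI1)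
  have sumeq: "(\<Sum>L\<in>\<L>. \<alpha> L * w (\<L>-{L0}) L * real (hom L X)) = \<alpha> L0 * w (\<L>-{L0}) L0 * real (hom L0 X)" for X
    using sum.remove[OF assms(3) L0, of "\<lambda>L. \<alpha> L * w (\<L>-{L0}) L * real (hom L X)"] z by simp
  have a0: "\<alpha> L0 \<noteq> 0" using assms(5) L0 by auto
  show "L0 \<in> cl \<F>"
    unfolding cl_def
  proof (intro CollectI conjI allI impI)
    show "simple_graph L0" using assms(2) L0 by auto
    fix G H assume "simple_graph G" "simple_graph H" "hom_equiv \<F> G H"
    then have "\<alpha> L0 * w (\<L>-{L0}) L0 * real (hom L0 G) = \<alpha> L0 * w (\<L>-{L0}) L0 * real (hom L0 H)"
      using IW sumeq unfolding Inv_def by metis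
    then show "hom L0 G = hom L0 H" using a0 nz by simp
  qed
qed

end
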